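(* Let $\mathcal E$ be an exact category. (1) For any subset $N\subseteq\mathsf M(\mathcal E)$, the subcategory $\mathcal D_N:=\{X\in\mathcal E\mid[X]\in N\}$ is closed under S-equivalences. (2) The maps $\mathcal D\mapsto\mathsf M_{\mathcal D}:=\{[X]\mid X\in\mathcal D\}$ and $N\mapsto\mathcal D_N$ are mutually inverse bijections between the set of subcategories of $\mathcal E$ closed under S-equivalences and the power set of $\mathsf M(\mathcal E)$.
   Context: All categories are skeletally small; subcategories are full and closed under isomorphisms. An exact category $\mathcal E$ is an additive full subcategory of an abelian category closed under extensions; conflations are short exact sequences with all terms in $\mathcal E$; an inflation is the first map of a conflation. The Grothendieck monoid $\mathsf M(\mathcal E)$ is the commutative monoid with a map $X\mapsto[X]$ on isomorphism classes with $[0]=0$ and $[Y]=[X]+[Z]$ for each conflation $0\to X\to Y\to Z\to0$, universal among such maps to commutative monoids. An admissible subobject series of $X$ is a chain $0=X_0\to X_1\to\cdots\to X_n=X$ of inflations (each $X_{i-1}\to X_i$ an inflation compatible with the inflations into $X$), with factors $X_i/X_{i-1}$ the cokernels. Objects $X,Y$ are S-equivalent, $X\sim_SY$, if they have admissible subobject series $(X_i)_{i=0}^n$, $(Y_i)_{i=0}^n$ of the same length and a permutation $\sigma$ of $\{1,\dots,n\}$ with $X_i/X_{i-1}\cong Y_{\sigma(i)}/Y_{\sigma(i)-1}$ for all $i$. A subcategory $\mathcal D$ is closed under S-equivalences if $X\in\mathcal D$ and $X\sim_SY$ imply $Y\in\mathcal D$. *)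

theory Defs
  imports Main "HOL-Library.Multiset"
begin

record ('o, 'm) cat =
  Ob  :: "'o set"
  Hm  :: "'o \<Rightarrow> 'o \<Rightarrow> 'm set"
  cmp :: "'m \<Rightarrow> 'm \<Rightarrow> 'm"   (* cmp g f = g o f *)
  idt :: "'o \<Rightarrow> 'm"

definition is_category :: "('o, 'm) cat \<Rightarrow> bool" where
  "is_category C \<longleftrightarrow>
     (\<forall>a\<in>Ob C. idt C a \<in> Hm C a a) \<and>
     (\<forall>a b. Hm C a b \<noteq> {} \<longrightarrow> a \<in> Ob C \<and> b \<in> Ob C) \<and>
     (\<forall>a\<in>Ob C. \<forall>b\<in>Ob C. \<forall>c\<in>Ob C. \<forall>f\<in>Hm C a b. \<forall>g\<in>Hm C b c. cmp C g f \<in> Hm C a c) \<and>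
     (\<forall>a\<in>Ob C. \<forall>b\<in>Ob C. \<forall>c\<in>Ob C. \<forall>d\<in>Ob C. \<forall>f\<in>Hm C a b. \<forall>g\<in>Hm C b c. \<forall>h\<in>Hm C c d.
        cmp C h (cmp C g f) = cmp C (cmp C h g) f) \<and>
     (\<forall>a\<in>Ob C. \<forall>b\<in>Ob C. \<forall>f\<in>Hm C a b. cmp C f (idt C a) = f \<and> cmp C (idt C b) f = f)"

definition is_iso :: "('o, 'm) cat \<Rightarrow> 'o \<Rightarrow> 'o \<Rightarrow> 'm \<Rightarrow> bool" where
  "is_iso C a b f \<longleftrightarrow> f \<in> Hm C a b \<and>
     (\<exists>g\<in>Hm C b a. cmp C g f = idt C a \<and> cmp C f g = idt C b)"

definition iso_obj :: "('o, 'm) cat \<Rightarrow> 'o \<Rightarrow> 'o \<Rightarrow> bool" where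
  "iso_obj C a b \<longleftrightarrow> (\<exists>f. is_iso C a b f)"

definition zero_obj :: "('o, 'm) cat \<Rightarrow> 'o \<Rightarrow> bool" where
  "zero_obj C z \<longleftrightarrow> z \<in> Ob C \<and>
     (\<forall>a\<in>Ob C. (\<exists>!f. f \<in> Hm C z a) \<and> (\<exists>!f. f \<in> Hm C a z))"

definition zero_mor :: "('o, 'm) cat \<Rightarrow> 'o \<Rightarrow> 'o \<Rightarrow> 'm \<Rightarrow> bool" where
  "zero_mor C a b f \<longleftrightarrow> f \<in> Hm C a b \<and>
     (\<exists>z. zero_obj C z \<and> (\<exists>u\<in>Hm C a z. \<exists>v\<in>Hm C z b. f = cmp C v u))"

definition is_mono :: "('o, 'm) cat \<Rightarrow> 'o \<Rightarrow> 'o \<Rightarrow> 'm \<Rightarrow> bool" where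
  "is_mono C a b f \<longleftrightarrow> f \<in> Hm C a b \<and>
     (\<forall>w\<in>Ob C. \<forall>h1\<in>Hm C w a. \<forall>h2\<in>Hm C w a. cmp C f h1 = cmp C f h2 \<longrightarrow> h1 = h2)"

definition is_epi :: "('o, 'm) cat \<Rightarrow> 'o \<Rightarrow> 'o \<Rightarrow> 'm \<Rightarrow> bool" where
  "is_epi C a b f \<longleftrightarrow> f \<in> Hm C a b \<and>
     (\<forall>w\<in>Ob C. \<forall>h1\<in>Hm C b w. \<forall>h2\<in>Hm C b w. cmp C h1 f = cmp C h2 f \<longrightarrow> h1 = h2)"

definition is_kernel :: "('o, 'm) cat \<Rightarrow> 'o \<Rightarrow> 'm \<Rightarrow> 'o \<Rightarrow> 'm \<Rightarrow> 'o \<Rightarrow> bool" where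
  "is_kernel C K k a g b \<longleftrightarrow> k \<in> Hm C K a \<and> g \<in> Hm C a b \<and> zero_mor C K b (cmp C g k) \<and>
     (\<forall>w\<in>Ob C. \<forall>h\<in>Hm C w a. zero_mor C w b (cmp C g h) \<longrightarrow>
        (\<exists>!u. u \<in> Hm C w K \<and> h = cmp C k u))"

definition is_cokernel :: "('o, 'm) cat \<Rightarrow> 'o \<Rightarrow> 'm \<Rightarrow> 'o \<Rightarrow> 'm \<Rightarrow> 'o \<Rightarrow> bool" where
  "is_cokernel C a f b c Q \<longleftrightarrow> f \<in> Hm C a b \<and> c \<in> Hm C b Q \<and> zero_mor C a Q (cmp C c f) \<and>
     (\<forall>w\<in>Ob C. \<forall>h\<in>Hm C b w. zero_mor C a w (cmp C h f) \<longrightarrow>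
        (\<exists>!u. u \<in> Hm C Q w \<and> h = cmp C u c))"

definition is_product :: "('o, 'm) cat \<Rightarrow> 'o \<Rightarrow> 'o \<Rightarrow> 'o \<Rightarrow> 'm \<Rightarrow> 'm \<Rightarrow> bool" where
  "is_product C a b P p1 p2 \<longleftrightarrow> P \<in> Ob C \<and> p1 \<in> Hm C P a \<and> p2 \<in> Hm C P b \<and>
     (\<forall>w\<in>Ob C. \<forall>f\<in>Hm C w a. \<forall>g\<in>Hm C w b.
        (\<exists>!u. u \<in> Hm C w P \<and> cmp C p1 u = f \<and> cmp C p2 u = g))"

definition is_coproduct :: "('o, 'm) cat \<Rightarrow> 'o \<Rightarrow> 'o \<Rightarrow> 'o \<Rightarrow> 'm \<Rightarrow> 'm \<Rightarrow> bool" where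
  "is_coproduct C a b S i1 i2 \<longleftrightarrow> S \<in> Ob C \<and> i1 \<in> Hm C a S \<and> i2 \<in> Hm C b S \<and>
     (\<forall>w\<in>Ob C. \<forall>f\<in>Hm C a w. \<forall>g\<in>Hm C b w.
        (\<exists>!u. u \<in> Hm C S w \<and> cmp C u i1 = f \<and> cmp C u i2 = g))"

definition abelian :: "('o, 'm) cat \<Rightarrow> bool" where
  "abelian C \<longleftrightarrow> is_category C \<and>
     (\<exists>z. zero_obj C z) \<and>
     (\<forall>a\<in>Ob C. \<forall>b\<in>Ob C. \<exists>P p1 p2. is_product C a b P p1 p2) \<and>
     (\<forall>a\<in>Ob C. \<forall>b\<in>Ob C. \<exists>S i1 i2. is_coproduct C a b S i1 i2) \<and>
     (\<forall>a\<in>Ob C. \<forall>b\<in>Ob C. \<forall>g\<in>Hm C a b. \<exists>K k. K \<in> Ob C \<and> is_kernel C K k a g b) \<and>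
     (\<forall>a\<in>Ob C. \<forall>b\<in>Ob C. \<forall>f\<in>Hm C a b. \<exists>Q c. Q \<in> Ob C \<and> is_cokernel C a f b c Q) \<and>
     (\<forall>a\<in>Ob C. \<forall>b\<in>Ob C. \<forall>f. is_mono C a b f \<longrightarrow> (\<exists>c\<in>Ob C. \<exists>g. is_kernel C a f b g c)) \<and>
     (\<forall>a\<in>Ob C. \<forall>b\<in>Ob C. \<forall>f. is_epi C a b f \<longrightarrow> (\<exists>c\<in>Ob C. \<exists>g. is_cokernel C c g a f b))"

definition short_exact :: "('o, 'm) cat \<Rightarrow> 'o \<Rightarrow> 'm \<Rightarrow> 'o \<Rightarrow> 'm \<Rightarrow> 'o \<Rightarrow> bool" where
  "short_exact C X f Y g Z \<longleftrightarrow> X \<in> Ob C \<and> Y \<in> Ob C \<and> Z \<in> Ob C \<and>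
     is_kernel C X f Y g Z \<and> is_cokernel C X f Y g Z"

text \<open>Full subcategories are given by object sets closed under isomorphism.\<close>
definition iso_closed :: "('o, 'm) cat \<Rightarrow> 'o set \<Rightarrow> 'o set \<Rightarrow> bool" where
  "iso_closed C A D \<longleftrightarrow> (\<forall>X\<in>D. \<forall>Y\<in>A. iso_obj C X Y \<longrightarrow> Y \<in> D)"

definition exact_category :: "('o, 'm) cat \<Rightarrow> 'o set \<Rightarrow> bool" where
  "exact_category C E \<longleftrightarrow> abelian C \<and> E \<subseteq> Ob C \<and> iso_closed C (Ob C) E \<and>
     (\<exists>z\<in>E. zero_obj C z) \<and>
     (\<forall>a\<in>E. \<forall>b\<in>E. \<exists>P p1 p2. is_product C a b P p1 p2 \<and> P \<in> E) \<and>
     (\<forall>X\<in>E. \<forall>Z\<in>E. \<forall>Y f g. short_exact C X f Y g Z \<longrightarrow> Y \<in> E)"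

definition subcategory :: "('o, 'm) cat \<Rightarrow> 'o set \<Rightarrow> 'o set \<Rightarrow> bool" where
  "subcategory C E D \<longleftrightarrow> D \<subseteq> E \<and> iso_closed C E D"

definition conflation :: "('o, 'm) cat \<Rightarrow> 'o set \<Rightarrow> 'o \<Rightarrow> 'm \<Rightarrow> 'o \<Rightarrow> 'm \<Rightarrow> 'o \<Rightarrow> bool" where
  "conflation C E X f Y g Z \<longleftrightarrow> X \<in> E \<and> Y \<in> E \<and> Z \<in> E \<and> short_exact C X f Y g Z"

text \<open>Presentation: free commutative monoid on objects of E (multisets) modulo the
  congruence generated by [0] = 0 and [Y] = [X] + [Z] for conflations.\<close>
inductive gm_rel :: "('o, 'm) cat \<Rightarrow> 'o set \<Rightarrow> 'o multiset \<Rightarrow> 'o multiset \<Rightarrow> bool"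
  for C :: "('o, 'm) cat" and E :: "'o set" where
  gm_refl: "set_mset A \<subseteq> E \<Longrightarrow> gm_rel C E A A"
| gm_sym: "gm_rel C E A B \<Longrightarrow> gm_rel C E B A"
| gm_trans: "gm_rel C E A B \<Longrightarrow> gm_rel C E B D \<Longrightarrow> gm_rel C E A D"
| gm_add: "gm_rel C E A B \<Longrightarrow> set_mset D \<subseteq> E \<Longrightarrow> gm_rel C E (A + D) (B + D)"
| gm_zero: "z \<in> E \<Longrightarrow> zero_obj C z \<Longrightarrow> gm_rel C E {#z#} {#}"
| gm_confl: "conflation C E X f Y g Z \<Longrightarrow> gm_rel C E {#Y#} {#X, Z#}"

definition GM :: "('o, 'm) cat \<Rightarrow> 'o set \<Rightarrow> 'o multiset set set" where
  "GM C E = {A. set_mset A \<subseteq> E} // {(A, B). gm_rel C E A B}"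

definition cls :: "('o, 'm) cat \<Rightarrow> 'o set \<Rightarrow> 'o \<Rightarrow> 'o multiset set" where
  "cls C E X = {(A, B). gm_rel C E A B} `` {{#X#}}"

definition D_of :: "('o, 'm) cat \<Rightarrow> 'o set \<Rightarrow> 'o multiset set set \<Rightarrow> 'o set" where
  "D_of C E N = {X \<in> E. cls C E X \<in> N}"

definition M_of :: "('o, 'm) cat \<Rightarrow> 'o set \<Rightarrow> 'o set \<Rightarrow> 'o multiset set set" where
  "M_of C E D = cls C E ` D"

text \<open>Admissible subobject series X_0 \<rightarrow> ... \<rightarrow> X_n = X with X_0 = 0, each
  X_{i-1} \<rightarrow> X_i an inflation with chosen conflation X_{i-1} \<rightarrow> X_i \<rightarrow> F_i (F_i the factor).\<close>
definition adm_series :: "('o, 'm) cat \<Rightarrow> 'o set \<Rightarrow> 'o \<Rightarrow> nat \<Rightarrow> (nat \<Rightarrow> 'o) \<Rightarrow> (nat \<Rightarrow> 'm)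
    \<Rightarrow> (nat \<Rightarrow> 'm) \<Rightarrow> (nat \<Rightarrow> 'o) \<Rightarrow> bool" where
  "adm_series C E X n xs fs gs F \<longleftrightarrow> xs 0 \<in> E \<and> zero_obj C (xs 0) \<and> xs n = X \<and>
     (\<forall>i\<in>{1..n}. conflation C E (xs (i - 1)) (fs i) (xs i) (gs i) (F i))"

definition S_equiv :: "('o, 'm) cat \<Rightarrow> 'o set \<Rightarrow> 'o \<Rightarrow> 'o \<Rightarrow> bool" where
  "S_equiv C E X Y \<longleftrightarrow> (\<exists>n xs fs gs F ys hs ks G \<sigma>.
      adm_series C E X n xs fs gs F \<and> adm_series C E Y n ys hs ks G \<and>
      bij_betw \<sigma> {1..n} {1..n} \<and> (\<forall>i\<in>{1..n}. iso_obj C (F i) (G (\<sigma> i))))"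

definition closed_S :: "('o, 'm) cat \<Rightarrow> 'o set \<Rightarrow> 'o set \<Rightarrow> bool" where
  "closed_S C E D \<longleftrightarrow> (\<forall>X Y. X \<in> D \<and> S_equiv C E X Y \<longrightarrow> Y \<in> D)"

end

theory Submission
  imports Defs
begin


locale ab = fixes C :: "('o,'m) cat" assumes ab: "abelian C"
begin
lemma cat: "is_category C" using ab by (simp add: abelian_def)
lemma idt: "a \<in> Ob C \<Longrightarrow> idt C a \<in> Hm C a a" using cat by (simp add: is_category_def)
lemma obs: "f \<in> Hm C a b \<Longrightarrow> a \<in> Ob C \<and> b \<in> Ob C" using cat unfolding is_category_def by blast
lemma comp: "f \<in> Hm C a b \<Longrightarrow> g \<in> Hm C b c \<Longrightarrow> cmp C g f \<in> Hm C a c"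
  using cat obs unfolding is_category_def by meson
lemma assoc: "f \<in> Hm C a b \<Longrightarrow> g \<in> Hm C b c \<Longrightarrow> h \<in> Hm C c d \<Longrightarrow> cmp C h (cmp C g f) = cmp C (cmp C h g) f"
  using cat obs unfolding is_category_def by meson
lemma idl: "f \<in> Hm C a b \<Longrightarrow> cmp C (idt C b) f = f"
  using cat obs unfolding is_category_def by meson
lemma idr: "f \<in> Hm C a b \<Longrightarrow> cmp C f (idt C a) = f"
  using cat obs unfolding is_category_def by meson
lemma zex: "\<exists>z. zero_obj C z" using ab by (simp add: abelian_def)

lemma zto: "zero_obj C z \<Longrightarrow> a \<in> Ob C \<Longrightarrow> \<exists>!f. f \<in> Hm C z a" by (simp add: zero_obj_def)
lemma zfrom: "zero_obj C z \<Longrightarrow> a \<in> Ob C \<Longrightarrow> \<exists>!f. f \<in> Hm C a z" by (simp add: zero_obj_def)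
lemma zob: "zero_obj C z \<Longrightarrow> z \<in> Ob C" by (simp add: zero_obj_def)

lemma zm_unique:
  assumes "zero_mor C a b f" "zero_mor C a b g" shows "f = g"
proof -
  obtain z u v where z: "zero_obj C z" "u \<in> Hm C a z" "v \<in> Hm C z b" "f = cmp C v u"
    using assms(1) by (auto simp: zero_mor_def)
  obtain z' u' v' where z': "zero_obj C z'" "u' \<in> Hm C a z'" "v' \<in> Hm C z' b" "g = cmp C v' u'"
    using assms(2) by (auto simp: zero_mor_def)
  obtain w where w: "w \<in> Hm C z z'" using zto[OF z(1) zob[OF z'(1)]] by blast
  have a: "a \<in> Ob C" using obs z(2) by blast
  have 1: "u' = cmp C w u" using zfrom[OF z'(1) a] comp[OF z(2) w] z'(2) by blast
  have 2: "v = cmp C v' w" using zto[OF z(1) conjunct2[OF obs[OF z(3)]]] comp[OF w z'(3)] z(3) by blast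
  show ?thesis using z z' 1 2 assoc[OF z(2) w z'(3)] by simp
qed

lemma zm_ex: assumes "a \<in> Ob C" "b \<in> Ob C" shows "\<exists>f. zero_mor C a b f"
proof -
  obtain z where z: "zero_obj C z" using zex by blast
  obtain u where u: "u \<in> Hm C a z" using zfrom[OF z assms(1)] by blast
  obtain v where v: "v \<in> Hm C z b" using zto[OF z assms(2)] by blast
  show ?thesis using z u v comp[OF u v] unfolding zero_mor_def by blast
qed

lemma zm_right: assumes "zero_mor C a b f" "h \<in> Hm C w a" shows "zero_mor C w b (cmp C f h)"
proof -
  obtain z u v where z: "zero_obj C z" "u \<in> Hm C a z" "v \<in> Hm C z b" "f = cmp C v u"
    using assms(1) by (auto simp: zero_mor_def)
  show ?thesis unfolding zero_mor_def
    using z assms comp[OF assms(2) z(2)] comp[OF comp[OF z(2) z(3)] ] assoc[OF assms(2) z(2) z(3)]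
      comp[OF assms(2) comp[OF z(2) z(3)]] by metis
qed

lemma zm_left: assumes "zero_mor C a b f" "h \<in> Hm C b c" shows "zero_mor C a c (cmp C h f)"
proof -
  obtain z u v where z: "zero_obj C z" "u \<in> Hm C a z" "v \<in> Hm C z b" "f = cmp C v u"
    using assms(1) by (auto simp: zero_mor_def)
  show ?thesis unfolding zero_mor_def
    using z assms comp[OF z(3) assms(2)] assoc[OF z(2) z(3) assms(2)]
      comp[OF comp[OF z(2) z(3)] assms(2)] by metis
qed

lemma zm_into: assumes "zero_obj C z" "f \<in> Hm C a z" shows "zero_mor C a z f"
  unfolding zero_mor_def using assms idl[OF assms(2)] idt[OF zob[OF assms(1)]] by metis

lemma zm_outof: assumes "zero_obj C z" "f \<in> Hm C z b" shows "zero_mor C z b f"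
  unfolding zero_mor_def using assms idr[OF assms(2)] idt[OF zob[OF assms(1)]] by metis

lemma zm_hm: "zero_mor C a b f \<Longrightarrow> f \<in> Hm C a b" by (simp add: zero_mor_def)
end



locale ex = fixes C :: "('o,'m) cat" and E assumes ex: "exact_category C E"
begin
sublocale ab C using ex by unfold_locales (simp add: exact_category_def)
lemma EO: "E \<subseteq> Ob C" using ex by (simp add: exact_category_def)
lemma zE: "\<exists>z\<in>E. zero_obj C z" using ex by (simp add: exact_category_def)

lemma iso_conf:
  assumes A: "A \<in> E" and B: "B \<in> E" and f: "is_iso C A B f"
  shows "\<exists>z t. z \<in> E \<and> zero_obj C z \<and> conflation C E A f B t z"
proof -
  obtain z where z: "z \<in> E" "zero_obj C z" using zE by blast
  obtain g where g: "f \<in> Hm C A B" "g \<in> Hm C B A" "cmp C g f = idt C A" "cmp C f g = idt C B"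
    using f by (auto simp: is_iso_def)
  have Bo: "B \<in> Ob C" using B EO by blast
  obtain t where t: "t \<in> Hm C B z" using zfrom[OF z(2) Bo] by blast
  have tf: "zero_mor C A z (cmp C t f)" using zm_into[OF z(2) comp[OF g(1) t]] .
  have ker: "is_kernel C A f B t z"
    unfolding is_kernel_def
  proof (intro conjI g(1) t tf ballI impI)
    fix w h assume w: "w \<in> Ob C" and h: "h \<in> Hm C w B"
    show "\<exists>!u. u \<in> Hm C w A \<and> h = cmp C f u"
    proof
      show "cmp C g h \<in> Hm C w A \<and> h = cmp C f (cmp C g h)"
        using comp[OF h g(2)] assoc[OF h g(2) g(1)] g(4) idl[OF h] by simp
    next
      fix u assume "u \<in> Hm C w A \<and> h = cmp C f u"
      then show "u = cmp C g h" using assoc[of u w A f B g A] g idl by auto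
    qed
  qed
  have cok: "is_cokernel C A f B t z"
    unfolding is_cokernel_def
  proof (intro conjI g(1) t tf ballI impI)
    fix w h assume w: "w \<in> Ob C" and h: "h \<in> Hm C B w" and hz: "zero_mor C A w (cmp C h f)"
    obtain u0 where u0: "u0 \<in> Hm C z w" using zto[OF z(2) w] by blast
    have "h = cmp C (cmp C h f) g" using assoc[OF g(2) g(1) h] g(4) idr[OF h] by simp
    then have hz2: "zero_mor C B w h" using zm_right[OF hz g(2)] by simp
    have "zero_mor C B w (cmp C u0 t)" using zm_left[OF zm_into[OF z(2) t] u0] .
    then have e: "h = cmp C u0 t" using zm_unique hz2 by blast
    show "\<exists>!u. u \<in> Hm C z w \<and> h = cmp C u t"
      using u0 e zto[OF z(2) w] by blast
  qed
  show ?thesis using z ker cok A B EO unfolding conflation_def short_exact_def by blast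
qed

lemma conf_zero_left:
  assumes X: "X \<in> E" and z: "z \<in> E" "zero_obj C z"
  shows "\<exists>t. conflation C E z t X (idt C X) X"
proof -
  have Xo: "X \<in> Ob C" using X EO by blast
  obtain t where t: "t \<in> Hm C z X" using zto[OF z(2) Xo] by blast
  have i: "idt C X \<in> Hm C X X" using idt[OF Xo] .
  have tz: "zero_mor C z X (cmp C (idt C X) t)" using idl[OF t] zm_outof[OF z(2) t] by simp
  have ker: "is_kernel C z t X (idt C X) X"
    unfolding is_kernel_def
  proof (intro conjI t i tz ballI impI)
    fix w h assume w: "w \<in> Ob C" and h: "h \<in> Hm C w X" and hz: "zero_mor C w X (cmp C (idt C X) h)"
    obtain u where u: "u \<in> Hm C w z" using zfrom[OF z(2) w] by blast
    have "zero_mor C w X (cmp C t u)" using zm_left[OF zm_into[OF z(2) u] t] .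
    then have "h = cmp C t u" using hz idl[OF h] zm_unique by metis
    then show "\<exists>!u. u \<in> Hm C w z \<and> h = cmp C t u" using u zfrom[OF z(2) w] by blast
  qed
  have cok: "is_cokernel C z t X (idt C X) X"
    unfolding is_cokernel_def
  proof (intro conjI t i tz ballI impI)
    fix w h assume w: "w \<in> Ob C" and h: "h \<in> Hm C X w"
    show "\<exists>!u. u \<in> Hm C X w \<and> h = cmp C u (idt C X)"
      using h idr by (metis)
  qed
  show ?thesis using ker cok X z Xo EO unfolding conflation_def short_exact_def by blast
qed

lemma split:
  assumes X: "X \<in> E" and Y: "Y \<in> E"
  shows "\<exists>P f g. conflation C E X f P g Y"
proof -
  obtain P p1 p2 where pr: "is_product C X Y P p1 p2" "P \<in> E"
    using ex X Y unfolding exact_category_def by blast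
  have Xo: "X \<in> Ob C" and Yo: "Y \<in> Ob C" and Po: "P \<in> Ob C" using X Y pr EO by auto
  have p1: "p1 \<in> Hm C P X" and p2: "p2 \<in> Hm C P Y" using pr by (auto simp: is_product_def)
  have U: "\<And>w f g. w \<in> Ob C \<Longrightarrow> f \<in> Hm C w X \<Longrightarrow> g \<in> Hm C w Y \<Longrightarrow>
      \<exists>!u. u \<in> Hm C w P \<and> cmp C p1 u = f \<and> cmp C p2 u = g"
    using pr by (auto simp: is_product_def)
  obtain zxy where zxy: "zero_mor C X Y zxy" using zm_ex[OF Xo Yo] by blast
  obtain zyx where zyx: "zero_mor C Y X zyx" using zm_ex[OF Yo Xo] by blast
  obtain i1 where i1: "i1 \<in> Hm C X P" "cmp C p1 i1 = idt C X" "cmp C p2 i1 = zxy"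
    using U[OF Xo idt[OF Xo] zm_hm[OF zxy]] by blast
  obtain i2 where i2: "i2 \<in> Hm C Y P" "cmp C p1 i2 = zyx" "cmp C p2 i2 = idt C Y"
    using U[OF Yo zm_hm[OF zyx] idt[OF Yo]] by blast
  have ker: "is_kernel C X i1 P p2 Y"
    unfolding is_kernel_def
  proof (intro conjI i1(1) p2 ballI impI)
    show "zero_mor C X Y (cmp C p2 i1)" using i1 zxy by simp
    fix w h assume w: "w \<in> Ob C" and h: "h \<in> Hm C w P" and hz: "zero_mor C w Y (cmp C p2 h)"
    have ph: "cmp C p1 h \<in> Hm C w X" using comp[OF h p1] .
    have c: "cmp C i1 (cmp C p1 h) \<in> Hm C w P" using comp[OF ph i1(1)] .
    have e1: "cmp C p1 (cmp C i1 (cmp C p1 h)) = cmp C p1 h"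
      using assoc[OF ph i1(1) p1] i1(2) idl[OF ph] by simp
    have "zero_mor C w Y (cmp C p2 (cmp C i1 (cmp C p1 h)))"
      using assoc[OF ph i1(1) p2] i1(3) zm_right[OF zxy ph] by simp
    then have e2: "cmp C p2 (cmp C i1 (cmp C p1 h)) = cmp C p2 h" using hz zm_unique by blast
    have eh: "h = cmp C i1 (cmp C p1 h)"
      using U[OF w ph comp[OF h p2]] h c e1 e2 by blast
    show "\<exists>!u. u \<in> Hm C w X \<and> h = cmp C i1 u"
    proof
      show "cmp C p1 h \<in> Hm C w X \<and> h = cmp C i1 (cmp C p1 h)" using ph eh by simp
    next
      fix u assume "u \<in> Hm C w X \<and> h = cmp C i1 u"
      then show "u = cmp C p1 h" using assoc[of u w X i1 P p1 X] i1 idl p1 by auto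
    qed
  qed
  have epi: "is_epi C P Y p2"
    unfolding is_epi_def
  proof (intro conjI p2 ballI impI)
    fix w h1 h2 assume w: "w \<in> Ob C" and h1: "h1 \<in> Hm C Y w" and h2: "h2 \<in> Hm C Y w"
      and e: "cmp C h1 p2 = cmp C h2 p2"
    have "h1 = cmp C (cmp C h1 p2) i2" using assoc[OF i2(1) p2 h1] i2(3) idr[OF h1] by simp
    also have "\<dots> = cmp C (cmp C h2 p2) i2" using e by simp
    also have "\<dots> = h2" using assoc[OF i2(1) p2 h2] i2(3) idr[OF h2] by simp
    finally show "h1 = h2" .
  qed
  obtain c g where cg: "c \<in> Ob C" "is_cokernel C c g P p2 Y"
    using ab Po Yo epi unfolding abelian_def by blast
  have g: "g \<in> Hm C c P" and gz: "zero_mor C c Y (cmp C p2 g)" using cg(2) by (auto simp: is_cokernel_def)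
  obtain u where u: "u \<in> Hm C c X" "g = cmp C i1 u"
    using ker cg(1) g gz unfolding is_kernel_def by blast
  have cok: "is_cokernel C X i1 P p2 Y"
    unfolding is_cokernel_def
  proof (intro conjI i1(1) p2 ballI impI)
    show "zero_mor C X Y (cmp C p2 i1)" using i1 zxy by simp
    fix w h assume w: "w \<in> Ob C" and h: "h \<in> Hm C P w" and hz: "zero_mor C X w (cmp C h i1)"
    have "zero_mor C c w (cmp C h g)" using zm_right[OF hz u(1)] assoc[OF u(1) i1(1) h] u(2) by simp
    then show "\<exists>!u. u \<in> Hm C Y w \<and> h = cmp C u p2"
      using cg(2) w h unfolding is_cokernel_def by blast
  qed
  show ?thesis using ker cok X Y pr Xo Yo Po unfolding conflation_def short_exact_def by blast
qed

lemma iso_refl: "a \<in> Ob C \<Longrightarrow> iso_obj C a a"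
  unfolding iso_obj_def is_iso_def using idt idl by metis

lemma iso_sym: "iso_obj C a b \<Longrightarrow> iso_obj C b a"
  unfolding iso_obj_def is_iso_def by blast

lemma zero_iso: assumes "zero_obj C z" "zero_obj C z'" shows "iso_obj C z z'"
proof -
  have o: "z \<in> Ob C" "z' \<in> Ob C" using assms zob by auto
  obtain f where f: "f \<in> Hm C z z'" using zto[OF assms(1) o(2)] by blast
  obtain g where g: "g \<in> Hm C z' z" using zto[OF assms(2) o(1)] by blast
  have "cmp C g f = idt C z" using zto[OF assms(1) o(1)] comp[OF f g] idt[OF o(1)] by blast
  moreover have "cmp C f g = idt C z'" using zto[OF assms(2) o(2)] comp[OF g f] idt[OF o(2)] by blast
  ultimately show ?thesis unfolding iso_obj_def is_iso_def using f g by blast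
qed
end



lemma gm_E: "gm_rel C E A B \<Longrightarrow> set_mset A \<subseteq> E \<and> set_mset B \<subseteq> E"
  by (induction rule: gm_rel.induct) (auto simp: conflation_def)

lemma gm_add2: "gm_rel C E A B \<Longrightarrow> gm_rel C E A' B' \<Longrightarrow> gm_rel C E (A + A') (B + B')"
proof -
  assume 1: "gm_rel C E A B" and 2: "gm_rel C E A' B'"
  have "gm_rel C E (A + A') (B + A')" using gm_add[OF 1] gm_E[OF 2] by blast
  moreover have "gm_rel C E (A' + B) (B' + B)" using gm_add[OF 2] gm_E[OF 1] by blast
  ultimately show ?thesis by (metis gm_trans add.commute)
qed

lemma gm_sum: "finite I \<Longrightarrow> (\<forall>i\<in>I. gm_rel C E (f i) (g i)) \<Longrightarrow> gm_rel C E (sum f I) (sum g I)"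
  by (induction I rule: finite_induct) (auto intro: gm_refl gm_add2)

lemma gm_equiv: "equiv {A. set_mset A \<subseteq> E} {(A, B). gm_rel C E A B}"
  unfolding equiv_def refl_on_def sym_def trans_def
  using gm_E by (blast intro: gm_refl gm_sym gm_trans)

lemma cls_GM: "X \<in> E \<Longrightarrow> cls C E X \<in> GM C E"
  unfolding cls_def GM_def by (rule quotientI) simp

lemma cls_eq: "X \<in> E \<Longrightarrow> Y \<in> E \<Longrightarrow> cls C E X = cls C E Y \<longleftrightarrow> gm_rel C E {#X#} {#Y#}"
  unfolding cls_def using eq_equiv_class_iff[OF gm_equiv[of E C], of "{#X#}" "{#Y#}"] by simp

context ex begin

lemma zero_add: "z \<in> E \<Longrightarrow> zero_obj C z \<Longrightarrow> set_mset A \<subseteq> E \<Longrightarrow> gm_rel C E (A + {#z#}) A"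
proof -
  assume a: "z \<in> E" "zero_obj C z" "set_mset A \<subseteq> E"
  have "gm_rel C E ({#z#} + A) ({#} + A)" by (rule gm_add[OF gm_zero[OF a(1,2)] a(3)])
  then show ?thesis by (simp add: add.commute)
qed

lemma iso_rel: assumes "X \<in> E" "Y \<in> E" "iso_obj C X Y" shows "gm_rel C E {#X#} {#Y#}"
proof -
  obtain f where f: "is_iso C X Y f" using assms(3) by (auto simp: iso_obj_def)
  obtain z t where z: "z \<in> E" "zero_obj C z" "conflation C E X f Y t z" using iso_conf[OF assms(1,2) f] by blast
  have 1: "gm_rel C E {#Y#} {#X, z#}" using gm_confl[OF z(3)] .
  have 2: "gm_rel C E ({#X#} + {#z#}) {#X#}" using zero_add z assms by simp
  have 3: "{#X#} + {#z#} = {#X, z#}" by simp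
  show ?thesis using 1 2 3 by (metis gm_sym gm_trans)
qed

lemma series_E: "adm_series C E X n xs fs gs F \<Longrightarrow> X \<in> E \<and> (\<forall>i\<in>{1..n}. F i \<in> E)"
proof -
  assume a: "adm_series C E X n xs fs gs F"
  show ?thesis
  proof (cases "n = 0")
    case True then show ?thesis using a by (auto simp: adm_series_def)
  next
    case False then have "n \<in> {1..n}" by simp
    then show ?thesis using a by (auto simp: adm_series_def conflation_def)
  qed
qed

lemma series_rel: assumes "adm_series C E X n xs fs gs F"
  shows "gm_rel C E {#X#} (\<Sum>i\<in>{1..n}. {#F i#})"
proof -
  have "k \<le> n \<Longrightarrow> gm_rel C E {#xs k#} (\<Sum>i\<in>{1..k}. {#F i#})" for k
  proof (induction k)
    case 0 then show ?case using assms by (simp add: adm_series_def gm_zero)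
  next
    case (Suc k)
    have c: "conflation C E (xs k) (fs (Suc k)) (xs (Suc k)) (gs (Suc k)) (F (Suc k))"
      using assms Suc(2) unfolding adm_series_def by force
    have "gm_rel C E {#xs (Suc k)#} {#xs k, F (Suc k)#}" using gm_confl[OF c] .
    moreover have "{#xs k, F (Suc k)#} = {#xs k#} + {#F (Suc k)#}" by simp
    ultimately have "gm_rel C E {#xs (Suc k)#} ({#xs k#} + {#F (Suc k)#})" by metis
    moreover have "gm_rel C E ({#xs k#} + {#F (Suc k)#}) ((\<Sum>i\<in>{1..k}. {#F i#}) + {#F (Suc k)#})"
      by (rule gm_add) (use Suc c in \<open>auto simp: conflation_def\<close>)
    moreover have "(\<Sum>i\<in>{1..Suc k}. {#F i#}) = (\<Sum>i\<in>{1..k}. {#F i#}) + {#F (Suc k)#}" by simp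
    ultimately show ?case by (metis gm_trans)
  qed
  from this[of n] show ?thesis using assms by (auto simp: adm_series_def)
qed

lemma S_rel: assumes "S_equiv C E X Y" shows "Y \<in> E" "gm_rel C E {#X#} {#Y#}"
proof -
  obtain n xs fs gs F ys hs ks G \<sigma> where s: "adm_series C E X n xs fs gs F" "adm_series C E Y n ys hs ks G"
    "bij_betw \<sigma> {1..n} {1..n}" "\<forall>i\<in>{1..n}. iso_obj C (F i) (G (\<sigma> i))"
    using assms unfolding S_equiv_def by blast
  show "Y \<in> E" using series_E[OF s(2)] by blast
  have 1: "gm_rel C E {#X#} (\<Sum>i\<in>{1..n}. {#F i#})" using series_rel[OF s(1)] .
  have 2: "gm_rel C E {#Y#} (\<Sum>i\<in>{1..n}. {#G i#})" using series_rel[OF s(2)] .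
  have GE: "\<forall>i\<in>{1..n}. G (\<sigma> i) \<in> E" using series_E[OF s(2)] s(3) bij_betwE by blast
  have 3: "gm_rel C E (\<Sum>i\<in>{1..n}. {#F i#}) (\<Sum>i\<in>{1..n}. {#G (\<sigma> i)#})"
  proof -
    have "\<forall>i\<in>{1..n}. gm_rel C E {#F i#} {#G (\<sigma> i)#}" using iso_rel series_E[OF s(1)] GE s(4) by blast
    then show ?thesis using gm_sum[of "{1..n}" C E "\<lambda>i. {#F i#}" "\<lambda>i. {#G (\<sigma> i)#}"] by simp
  qed
  have 4: "(\<Sum>i\<in>{1..n}. {#G (\<sigma> i)#}) = (\<Sum>i\<in>{1..n}. {#G i#})"
    using sum.reindex_bij_betw[OF s(3), of "\<lambda>i. {#G i#}"] by simp
  show "gm_rel C E {#X#} {#Y#}" using 1 2 3 4 by (metis gm_sym gm_trans)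
qed

lemma every_single: "set_mset A \<subseteq> E \<Longrightarrow> \<exists>X\<in>E. gm_rel C E A {#X#}"
proof (induction A)
  case empty then show ?case using zE by (blast intro: gm_sym gm_zero)
next
  case (add Y A)
  then obtain X where X: "X \<in> E" "gm_rel C E A {#X#}" by auto
  have Y: "Y \<in> E" using add by simp
  obtain P f g where c: "conflation C E X f P g Y" using split[OF X(1) Y] by blast
  have 1: "gm_rel C E (A + {#Y#}) ({#X#} + {#Y#})" by (rule gm_add[OF X(2)]) (simp add: Y)
  have 2: "gm_rel C E {#X, Y#} {#P#}" using gm_sym[OF gm_confl[OF c]] .
  have 3: "{#X#} + {#Y#} = {#X, Y#}" "A + {#Y#} = add_mset Y A" by simp_all
  have "gm_rel C E (add_mset Y A) {#P#}" using 1 2 3 by (metis gm_trans)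
  then show ?case using c by (auto simp: conflation_def)
qed
end



lemma mem_sum_single: "finite I \<Longrightarrow> x \<in># (\<Sum>i\<in>I. {#F i#}) \<longleftrightarrow> (\<exists>i\<in>I. x = F i)"
  by (induction I rule: finite_induct) auto

lemma size_sum_single: "size (\<Sum>i\<in>{1..(n::nat)}. {#F i#}) = n"
  by (induction n) auto

lemma perm_ex: "(\<Sum>i\<in>{1..(n::nat)}. {#F i#}) = (\<Sum>i\<in>{1..n}. {#G i#}) \<Longrightarrow>
   \<exists>\<sigma>. bij_betw \<sigma> {1..n} {1..n} \<and> (\<forall>i\<in>{1..n}. F i = G (\<sigma> i))"
proof (induction n arbitrary: G)
  case 0 then show ?case by (auto intro: exI[of _ id])
next
  case (Suc n)
  have "F (Suc n) \<in># (\<Sum>i\<in>{1..Suc n}. {#G i#})" using Suc.prems[symmetric] by simp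
  then have "\<exists>j\<in>{1..Suc n}. F (Suc n) = G j" using mem_sum_single[of "{1..Suc n}" "F (Suc n)" G] by blast
  then obtain j where j: "j \<in> {1..Suc n}" "F (Suc n) = G j" by blast
  define \<tau> where "\<tau> = (\<lambda>i::nat. if i = j then Suc n else if i = Suc n then j else i)"
  have bt: "bij_betw \<tau> {1..Suc n} {1..Suc n}"
    by (rule bij_betw_byWitness[where f'=\<tau>]) (use j in \<open>auto simp: \<tau>_def\<close>)
  define G' where "G' = G \<circ> \<tau>"
  have "(\<Sum>i\<in>{1..Suc n}. {#G' i#}) = (\<Sum>i\<in>{1..Suc n}. {#G i#})"
    using sum.reindex_bij_betw[OF bt, of "\<lambda>i. {#G i#}"] by (simp add: G'_def)
  then have "(\<Sum>i\<in>{1..n}. {#F i#}) + {#F (Suc n)#} = (\<Sum>i\<in>{1..n}. {#G' i#}) + {#G' (Suc n)#}"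
    using Suc.prems by simp
  moreover have "G' (Suc n) = F (Suc n)" using j by (simp add: G'_def \<tau>_def)
  ultimately have "(\<Sum>i\<in>{1..n}. {#F i#}) = (\<Sum>i\<in>{1..n}. {#G' i#})" by simp
  then obtain \<sigma> where s: "bij_betw \<sigma> {1..n} {1..n}" "\<forall>i\<in>{1..n}. F i = G' (\<sigma> i)" using Suc.IH by blast
  define \<sigma>' where "\<sigma>' = \<sigma>(Suc n := Suc n)"
  have b1: "bij_betw \<sigma>' {1..n} {1..n}" using s(1) by (rule bij_betw_cong[THEN iffD1, rotated]) (auto simp: \<sigma>'_def)
  have b2: "bij_betw \<sigma>' {Suc n} {Suc n}" by (simp add: \<sigma>'_def bij_betw_def)
  have "bij_betw \<sigma>' ({1..n} \<union> {Suc n}) ({1..n} \<union> {Suc n})" by (rule bij_betw_combine[OF b1 b2]) auto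
  moreover have "{1..n} \<union> {Suc n} = {1..Suc n}" by auto
  ultimately have b3: "bij_betw \<sigma>' {1..Suc n} {1..Suc n}" by simp
  have "bij_betw (\<tau> \<circ> \<sigma>') {1..Suc n} {1..Suc n}" using bij_betw_trans[OF b3 bt] .
  moreover have "\<forall>i\<in>{1..Suc n}. F i = G ((\<tau> \<circ> \<sigma>') i)"
  proof
    fix i assume i: "i \<in> {1..Suc n}"
    show "F i = G ((\<tau> \<circ> \<sigma>') i)"
    proof (cases "i = Suc n")
      case True then show ?thesis using j by (simp add: \<sigma>'_def \<tau>_def)
    next
      case False then have "i \<in> {1..n}" using i by auto
      then show ?thesis using s(2) False by (simp add: \<sigma>'_def G'_def)
    qed
  qed
  ultimately show ?case by blast
qed

definition Phi :: "('o, 'm) cat \<Rightarrow> 'o set \<Rightarrow> 'o multiset \<Rightarrow> 'o \<Rightarrow> bool" where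
  "Phi C E A X \<longleftrightarrow> (\<exists>n xs fs gs F. adm_series C E X n xs fs gs F \<and> (\<Sum>i\<in>{1..n}. {#F i#}) = A)"

lemma series_ext:
  assumes "adm_series C E X n xs fs gs F" "conflation C E X f P g d"
  shows "adm_series C E P (Suc n) (xs(Suc n:=P)) (fs(Suc n:=f)) (gs(Suc n:=g)) (F(Suc n:=d))"
  using assms unfolding adm_series_def by (auto simp: le_Suc_eq)

context ex begin

lemma phi_ext: assumes "Phi C E A X" "conflation C E X f P g d" shows "Phi C E (A + {#d#}) P"
proof -
  obtain n xs fs gs F where s: "adm_series C E X n xs fs gs F" "(\<Sum>i\<in>{1..n}. {#F i#}) = A"
    using assms(1) unfolding Phi_def by blast
  have "(\<Sum>i\<in>{1..Suc n}. {#(F(Suc n:=d)) i#}) = (\<Sum>i\<in>{1..n}. {#(F(Suc n:=d)) i#}) + {#d#}" by simp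
  also have "(\<Sum>i\<in>{1..n}. {#(F(Suc n:=d)) i#}) = (\<Sum>i\<in>{1..n}. {#F i#})" by (rule sum.cong) auto
  finally show ?thesis unfolding Phi_def using series_ext[OF s(1) assms(2)] s(2) by blast
qed

lemma phi_empty: "z \<in> E \<Longrightarrow> zero_obj C z \<Longrightarrow> Phi C E {#} z"
  unfolding Phi_def adm_series_def by (rule exI[of _ 0]) auto

lemma phi_single: assumes "X \<in> E" shows "Phi C E {#X#} X"
proof -
  obtain z where z: "z \<in> E" "zero_obj C z" using zE by blast
  obtain t where "conflation C E z t X (idt C X) X" using conf_zero_left[OF assms z] by blast
  from phi_ext[OF phi_empty[OF z] this] show ?thesis by simp
qed

lemma phi_nonempty: "set_mset A \<subseteq> E \<Longrightarrow> \<exists>X. Phi C E A X"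
proof (induction A)
  case empty then show ?case using zE phi_empty by blast
next
  case (add d A)
  then obtain X where X: "Phi C E A X" by auto
  have XE: "X \<in> E" using X series_E unfolding Phi_def by blast
  have dE: "d \<in> E" using add.prems by simp
  obtain P f g where "conflation C E X f P g d" using split[OF XE dE] by blast
  from phi_ext[OF X this] show ?case by auto
qed

lemma phi_E: assumes "Phi C E A X" shows "X \<in> E" "set_mset A \<subseteq> E"
proof -
  obtain n xs fs gs F where s: "adm_series C E X n xs fs gs F" "(\<Sum>i\<in>{1..n}. {#F i#}) = A"
    using assms unfolding Phi_def by blast
  show "X \<in> E" using series_E[OF s(1)] by blast
  show "set_mset A \<subseteq> E" using series_E[OF s(1)] s(2) mem_sum_single[of "{1..n}" _ F] by auto
qed

lemma phi_S: assumes "Phi C E A X" "Phi C E A Y" shows "S_equiv C E X Y"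
proof -
  obtain n xs fs gs F where s: "adm_series C E X n xs fs gs F" "(\<Sum>i\<in>{1..n}. {#F i#}) = A"
    using assms(1) unfolding Phi_def by blast
  obtain m ys hs ks G where t: "adm_series C E Y m ys hs ks G" "(\<Sum>i\<in>{1..m}. {#G i#}) = A"
    using assms(2) unfolding Phi_def by blast
  have "size A = n" "size A = m" using s(2) t(2) size_sum_single[where n=n and F=F] size_sum_single[where n=m and F=G] by auto
  then have nm: "m = n" by simp
  obtain \<sigma> where sg: "bij_betw \<sigma> {1..n} {1..n}" "\<forall>i\<in>{1..n}. F i = G (\<sigma> i)"
    using perm_ex[where n=n and F=F and G=G] s(2) t(2) nm by auto
  have "\<forall>i\<in>{1..n}. iso_obj C (F i) (G (\<sigma> i))" using sg(2) series_E[OF s(1)] iso_refl EO by auto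
  then show ?thesis unfolding S_equiv_def using s(1) t(1) nm sg(1) by blast
qed

lemma S_sym: assumes "S_equiv C E X Y" shows "S_equiv C E Y X"
proof -
  obtain n xs fs gs F ys hs ks G \<sigma> where s: "adm_series C E X n xs fs gs F" "adm_series C E Y n ys hs ks G"
    "bij_betw \<sigma> {1..n} {1..n}" "\<forall>i\<in>{1..n}. iso_obj C (F i) (G (\<sigma> i))"
    using assms unfolding S_equiv_def by blast
  define \<rho> where "\<rho> = inv_into {1..n} \<sigma>"
  have b: "bij_betw \<rho> {1..n} {1..n}" using bij_betw_inv_into[OF s(3)] by (simp add: \<rho>_def)
  have "\<forall>i\<in>{1..n}. iso_obj C (G i) (F (\<rho> i))"
  proof
    fix i assume i: "i \<in> {1..n}"
    have "\<rho> i \<in> {1..n}" using b i bij_betwE by blast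
    moreover have "\<sigma> (\<rho> i) = i" using i s(3) unfolding \<rho>_def by (simp add: bij_betw_inv_into_right)
    ultimately show "iso_obj C (G i) (F (\<rho> i))" using s(4) iso_sym by metis
  qed
  then show ?thesis unfolding S_equiv_def using s(1,2) b by blast
qed

lemma S_ext: assumes "S_equiv C E X Y" "conflation C E X f P g d" "conflation C E Y f' Q g' d"
  shows "S_equiv C E P Q"
proof -
  obtain n xs fs gs F ys hs ks G \<sigma> where s: "adm_series C E X n xs fs gs F" "adm_series C E Y n ys hs ks G"
    "bij_betw \<sigma> {1..n} {1..n}" "\<forall>i\<in>{1..n}. iso_obj C (F i) (G (\<sigma> i))"
    using assms unfolding S_equiv_def by blast
  define \<sigma>' where "\<sigma>' = \<sigma>(Suc n := Suc n)"
  have b1: "bij_betw \<sigma>' {1..n} {1..n}" using s(3) by (rule bij_betw_cong[THEN iffD1, rotated]) (auto simp: \<sigma>'_def)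
  have b2: "bij_betw \<sigma>' {Suc n} {Suc n}" by (simp add: \<sigma>'_def bij_betw_def)
  have "bij_betw \<sigma>' ({1..n} \<union> {Suc n}) ({1..n} \<union> {Suc n})" by (rule bij_betw_combine[OF b1 b2]) auto
  moreover have "{1..n} \<union> {Suc n} = {1..Suc n}" by auto
  ultimately have b3: "bij_betw \<sigma>' {1..Suc n} {1..Suc n}" by simp
  have dE: "d \<in> E" using assms(2) by (simp add: conflation_def)
  have "\<forall>i\<in>{1..Suc n}. iso_obj C ((F(Suc n:=d)) i) ((G(Suc n := d)) (\<sigma>' i))"
  proof
    fix i assume i: "i \<in> {1..Suc n}"
    show "iso_obj C ((F(Suc n:=d)) i) ((G(Suc n := d)) (\<sigma>' i))"
    proof (cases "i = Suc n")
      case True then show ?thesis using iso_refl dE EO by (auto simp: \<sigma>'_def)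
    next
      case False then have i': "i \<in> {1..n}" using i by auto
      then have "\<sigma> i \<in> {1..n}" using s(3) bij_betwE by blast
      then show ?thesis using s(4) i' False by (auto simp: \<sigma>'_def)
    qed
  qed
  then show ?thesis unfolding S_equiv_def using series_ext[OF s(1) assms(2)] series_ext[OF s(2) assms(3)] b3 by blast
qed

definition Ext where "Ext d X = (SOME P. \<exists>f g. conflation C E X f P g d)"

lemma Ext: "X \<in> E \<Longrightarrow> d \<in> E \<Longrightarrow> \<exists>f g. conflation C E X f (Ext d X) g d"
  unfolding Ext_def using split by (rule someI_ex) (meson split)

lemma rtc_ext: "(S_equiv C E)\<^sup>*\<^sup>* X Y \<Longrightarrow> X \<in> E \<Longrightarrow> d \<in> E \<Longrightarrow> (S_equiv C E)\<^sup>*\<^sup>* (Ext d X) (Ext d Y)"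
proof (induction rule: rtranclp_induct)
  case base then show ?case by simp
next
  case (step Y Z)
  have YE: "Y \<in> E" using step(1,4) by (induction rule: rtranclp_induct) (auto intro: S_rel)
  obtain f g where 1: "conflation C E Y f (Ext d Y) g d" using Ext[OF YE step(5)] by blast
  obtain f' g' where 2: "conflation C E Z f' (Ext d Z) g' d" using Ext[OF S_rel(1)[OF step(2)] step(5)] by blast
  show ?case using step S_ext[OF step(2) 1 2] by (meson rtranclp.rtrancl_into_rtrancl)
qed
end


context ex begin

lemma rtc_sym: "(S_equiv C E)\<^sup>*\<^sup>* X Y \<Longrightarrow> (S_equiv C E)\<^sup>*\<^sup>* Y X"
proof (induction rule: rtranclp_induct)
  case base then show ?case by simp
next
  case (step Y Z) then show ?case using converse_rtranclp_into_rtranclp[OF S_sym[OF step(2)] step(3)] by simp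
qed

abbreviation "Q A B \<equiv> (\<forall>X Y. Phi C E A X \<longrightarrow> Phi C E B Y \<longrightarrow> (S_equiv C E)\<^sup>*\<^sup>* X Y)"

lemma add_one: assumes "Q A B" "set_mset A \<subseteq> E" "set_mset B \<subseteq> E" "d \<in> E"
  shows "Q (A + {#d#}) (B + {#d#})"
proof (intro allI impI)
  fix X Y assume X: "Phi C E (A + {#d#}) X" and Y: "Phi C E (B + {#d#}) Y"
  obtain X0 where X0: "Phi C E A X0" using phi_nonempty assms(2) by blast
  obtain Y0 where Y0: "Phi C E B Y0" using phi_nonempty assms(3) by blast
  have X0E: "X0 \<in> E" and Y0E: "Y0 \<in> E" using phi_E X0 Y0 by auto
  obtain f g where 1: "conflation C E X0 f (Ext d X0) g d" using Ext[OF X0E assms(4)] by blast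
  obtain f' g' where 2: "conflation C E Y0 f' (Ext d Y0) g' d" using Ext[OF Y0E assms(4)] by blast
  have a: "S_equiv C E X (Ext d X0)" using phi_S[OF X phi_ext[OF X0 1]] .
  have b: "S_equiv C E (Ext d Y0) Y" using phi_S[OF phi_ext[OF Y0 2] Y] .
  have "(S_equiv C E)\<^sup>*\<^sup>* X0 Y0" using assms(1) X0 Y0 by blast
  then have c: "(S_equiv C E)\<^sup>*\<^sup>* (Ext d X0) (Ext d Y0)" using rtc_ext X0E assms(4) by blast
  show "(S_equiv C E)\<^sup>*\<^sup>* X Y" using a b c
    by (meson converse_rtranclp_into_rtranclp rtranclp.rtrancl_into_rtrancl)
qed

lemma add_many: "Q A B \<Longrightarrow> set_mset A \<subseteq> E \<Longrightarrow> set_mset B \<subseteq> E \<Longrightarrow> set_mset D \<subseteq> E \<Longrightarrow> Q (A + D) (B + D)"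
proof (induction D)
  case empty then show ?case by simp
next
  case (add d D)
  have dE: "d \<in> E" and DE: "set_mset D \<subseteq> E" using add.prems by auto
  have q: "Q (A + D) (B + D)" by (rule add.IH[OF add.prems(1-3) DE])
  have "Q (A + D + {#d#}) (B + D + {#d#})"
    by (rule add_one[OF q]) (use add.prems DE dE in auto)
  then show ?case by simp
qed

lemma phi_one: assumes "Phi C E {#a#} X"
  shows "\<exists>xs fs gs F. adm_series C E X 1 xs fs gs F \<and> F 1 = a"
proof -
  obtain n xs fs gs F where s: "adm_series C E X n xs fs gs F" "(\<Sum>i\<in>{1..n}. {#F i#}) = {#a#}"
    using assms unfolding Phi_def by blast
  have "n = size (\<Sum>i\<in>{1..n}. {#F i#})" by (rule size_sum_single[symmetric])
  also have "\<dots> = 1" using s(2) by simp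
  finally have "n = 1" .
  then show ?thesis using s by auto
qed

lemma phi_zero: assumes "Phi C E {#} X" shows "zero_obj C X"
proof -
  obtain n xs fs gs F where s: "adm_series C E X n xs fs gs F" "(\<Sum>i\<in>{1..n}. {#F i#}) = {#}"
    using assms unfolding Phi_def by blast
  have "n = size (\<Sum>i\<in>{1..n}. {#F i#})" by (rule size_sum_single[symmetric])
  also have "\<dots> = 0" using s(2) by simp
  finally have "n = 0" .
  then show ?thesis using s by (auto simp: adm_series_def)
qed

lemma main: "gm_rel C E A B \<Longrightarrow> Q A B"
proof (induction rule: gm_rel.induct)
  case (gm_refl A) show ?case
  proof (intro allI impI)
    fix X Y assume "Phi C E A X" "Phi C E A Y"
    then show "(S_equiv C E)\<^sup>*\<^sup>* X Y" using phi_S by (intro r_into_rtranclp)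
  qed
next
  case (gm_sym A B) show ?case
  proof (intro allI impI)
    fix X Y assume "Phi C E B X" "Phi C E A Y"
    then show "(S_equiv C E)\<^sup>*\<^sup>* X Y" using gm_sym.IH rtc_sym by blast
  qed
next
  case (gm_trans A B D)
  obtain W where W: "Phi C E B W" using phi_nonempty gm_E[OF gm_trans(1)] by blast
  show ?case
  proof (intro allI impI)
    fix X Y assume X: "Phi C E A X" and Y: "Phi C E D Y"
    have "(S_equiv C E)\<^sup>*\<^sup>* X W" using gm_trans.IH(1) X W by blast
    moreover have "(S_equiv C E)\<^sup>*\<^sup>* W Y" using gm_trans.IH(2) W Y by blast
    ultimately show "(S_equiv C E)\<^sup>*\<^sup>* X Y" by (rule rtranclp_trans)
  qed
next
  case (gm_add A B D)
  have "set_mset A \<subseteq> E" "set_mset B \<subseteq> E" using gm_E[OF gm_add(1)] by auto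
  then show ?case by (rule add_many[OF gm_add.IH _ _ gm_add(2)])
next
  case (gm_zero z)
  show ?case
  proof (intro allI impI)
    fix X Y assume X: "Phi C E {#z#} X" and Y: "Phi C E {#} Y"
    have Yz: "zero_obj C Y" using phi_zero[OF Y] .
    have YE: "Y \<in> E" using phi_E[OF Y] by simp
    obtain xs fs gs F where 1: "adm_series C E X 1 xs fs gs F" "F 1 = z" using phi_one[OF X] by blast
    obtain ys hs ks G where 2: "adm_series C E Y 1 ys hs ks G" "G 1 = Y" using phi_one[OF phi_single[OF YE]] by blast
    have "iso_obj C (F 1) (G (id 1))" using 1 2 zero_iso[OF gm_zero(2) Yz] by simp
    moreover have "\<forall>i\<in>{1..1::nat}. i = 1" by simp
    ultimately have "\<forall>i\<in>{1..1::nat}. iso_obj C (F i) (G (id i))" by simp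
    then have "S_equiv C E X Y" unfolding S_equiv_def using 1(1) 2(1) bij_betw_id[of "{1..1::nat}"]
      by blast
    then show "(S_equiv C E)\<^sup>*\<^sup>* X Y" by blast
  qed
next
  case (gm_confl X f Y g Z)
  have E3: "X \<in> E" "Y \<in> E" "Z \<in> E" using gm_confl by (auto simp: conflation_def)
  have "Phi C E ({#X#} + {#Z#}) Y" using phi_ext[OF phi_single[OF E3(1)] gm_confl] .
  then have pY: "Phi C E {#X, Z#} Y" by (simp add: add_mset_commute)
  show ?case
  proof (intro allI impI)
    fix W V assume W: "Phi C E {#Y#} W" and V: "Phi C E {#X, Z#} V"
    have "S_equiv C E W Y" using phi_S[OF W phi_single[OF E3(2)]] .
    moreover have "S_equiv C E Y V" using phi_S[OF pY V] .
    ultimately show "(S_equiv C E)\<^sup>*\<^sup>* W V" by (meson converse_rtranclp_into_rtranclp r_into_rtranclp)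
  qed
qed

lemma closed_rtc: "(S_equiv C E)\<^sup>*\<^sup>* X Y \<Longrightarrow> closed_S C E D \<Longrightarrow> X \<in> D \<Longrightarrow> Y \<in> D"
proof (induction rule: rtranclp_induct)
  case base then show ?case by simp
next
  case (step Y Z) then show ?case unfolding closed_S_def by blast
qed

end

theorem mainTheorem10:
  fixes C :: "('o, 'm) cat" and E :: "'o set"
  assumes "exact_category C E"
  shows "(\<forall>N. N \<subseteq> GM C E \<longrightarrow> closed_S C E (D_of C E N)) \<and>
         (\<forall>D. subcategory C E D \<and> closed_S C E D \<longrightarrow>
              M_of C E D \<in> Pow (GM C E) \<and> D_of C E (M_of C E D) = D) \<and>
         (\<forall>N \<in> Pow (GM C E).
              subcategory C E (D_of C E N) \<and> closed_S C E (D_of C E N) \<and>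
              M_of C E (D_of C E N) = N)"
proof -
  interpret ex C E using assms by unfold_locales
  have P1: "closed_S C E (D_of C E N)" for N
    unfolding closed_S_def D_of_def
  proof (intro allI impI)
    fix X Y assume a: "X \<in> {X \<in> E. cls C E X \<in> N} \<and> S_equiv C E X Y"
    have YE: "Y \<in> E" using S_rel(1) a by blast
    have XE: "X \<in> E" using a by simp
    have "gm_rel C E {#X#} {#Y#}" using S_rel(2) a by blast
    then have "cls C E X = cls C E Y" using cls_eq[where C=C, OF XE YE] by simp
    then show "Y \<in> {X \<in> E. cls C E X \<in> N}" using a YE by simp
  qed
  have P2: "M_of C E D \<in> Pow (GM C E) \<and> D_of C E (M_of C E D) = D"
    if D: "subcategory C E D" "closed_S C E D" for D
  proof
    have DE: "D \<subseteq> E" using D by (simp add: subcategory_def)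
    show "M_of C E D \<in> Pow (GM C E)" using DE by (auto simp: M_of_def intro!: cls_GM)
    show "D_of C E (M_of C E D) = D"
    proof
      show "D \<subseteq> D_of C E (M_of C E D)" using DE unfolding D_of_def M_of_def by auto
    next
      show "D_of C E (M_of C E D) \<subseteq> D"
      proof
        fix X assume "X \<in> D_of C E (M_of C E D)"
        then obtain Y where XY: "X \<in> E" "Y \<in> D" "cls C E X = cls C E Y" unfolding D_of_def M_of_def by auto
        have YE: "Y \<in> E" using XY DE by blast
        have "gm_rel C E {#Y#} {#X#}" using cls_eq[where C=C, OF YE XY(1)] XY(3) by simp
        then have "Q {#Y#} {#X#}" by (rule main)
        then have "(S_equiv C E)\<^sup>*\<^sup>* Y X" using phi_single[OF YE] phi_single[OF XY(1)] by blast
        then show "X \<in> D" using closed_rtc D(2) XY(2) by blast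
      qed
    qed
  qed
  have P3: "subcategory C E (D_of C E N) \<and> closed_S C E (D_of C E N) \<and> M_of C E (D_of C E N) = N"
    if N: "N \<subseteq> GM C E" for N
  proof (intro conjI P1)
    show "subcategory C E (D_of C E N)"
      unfolding subcategory_def iso_closed_def
    proof (intro conjI ballI impI)
      show "D_of C E N \<subseteq> E" by (auto simp: D_of_def)
      fix X Y assume a: "X \<in> D_of C E N" "Y \<in> E" "iso_obj C X Y"
      have XE: "X \<in> E" using a by (simp add: D_of_def)
      have "cls C E X = cls C E Y" using cls_eq[where C=C, OF XE a(2)] iso_rel[OF XE a(2,3)] by simp
      then show "Y \<in> D_of C E N" using a by (simp add: D_of_def)
    qed
    show "M_of C E (D_of C E N) = N"
    proof
      show "M_of C E (D_of C E N) \<subseteq> N" by (auto simp: M_of_def D_of_def)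
    next
      show "N \<subseteq> M_of C E (D_of C E N)"
      proof
        fix c assume c: "c \<in> N"
        then obtain A where A: "set_mset A \<subseteq> E" "c = {(A, B). gm_rel C E A B} `` {A}"
          using N c unfolding GM_def by (auto elim!: quotientE)
        obtain X where X: "X \<in> E" "gm_rel C E A {#X#}" using every_single[OF A(1)] by blast
        have "cls C E X = c" unfolding cls_def A(2)
          using equiv_class_eq[OF gm_equiv[of E C], of A "{#X#}"] X by simp
        then show "c \<in> M_of C E (D_of C E N)" using X c unfolding M_of_def D_of_def by auto
      qed
    qed
  qed
  show ?thesis using P1 P2 P3 by blast
qed

end
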